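(* Let $C$ be a binary linear $[n,k]$ code with minimum distance $d(C)$ and covering radius $\rho(C)$, let $G$ be a generator matrix of $C$ with rows $\mathbf r_1,\dots,\mathbf r_k$, let $\mathbf x=(x_1,\dots,x_n)\in\mathbb F_2^n$ and $y_i=\mathbf x\cdot\mathbf r_i$. Let $C_i$ ($i=1,2,3$) be the code obtained by any of Constructions I–IV, namely: $C_1$ (when $\mathbf x\cdot\mathbf x=1$) and $C_3$ (when $\mathbf x\cdot\mathbf x=0$) generated by the matrix with first row $(1,0,x_1,\dots,x_n)$ and further rows $(y_i,y_i,\mathbf r_i)$, $1\le i\le k$; and $C_2$ (when $\mathbf x\cdot\mathbf x=0$) generated by the matrix with first row $(1,1,x_1,\dots,x_n)$ and further rows $(y_i,0,\mathbf r_i)$, $1\le i\le k$. Then \[ \min\{d(C),\mathrm{weight}(\mathbf x+C)+1\}\le d(C_i)\le \rho(C)+2 . \]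
   Context: $\mathrm{weight}(\mathbf x+C)$ denotes the minimum Hamming weight of a vector in the coset $\mathbf x+C$. The covering radius $\rho(C)$ is the maximum over $\mathbf u\in\mathbb F_2^n$ of the Hamming distance from $\mathbf u$ to $C$. Dot products are standard over $\mathbb F_2$. *)

theory Defs
  imports Main
begin

text \<open>Binary vectors of length n are represented as bool lists of length n
  (True = 1, False = 0). Addition over F_2 is componentwise xor.\<close>

definition zerov :: "nat \<Rightarrow> bool list" where
  "zerov n = replicate n False"

definition vadd :: "bool list \<Rightarrow> bool list \<Rightarrow> bool list" where
  "vadd u v = map2 (\<noteq>) u v"

definition wt :: "bool list \<Rightarrow> nat" where
  "wt v = length (filter id v)"

definition dotp :: "bool list \<Rightarrow> bool list \<Rightarrow> bool" where
  "dotp u v = odd (length (filter id (map2 (\<and>) u v)))"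

definition lin_comb :: "nat \<Rightarrow> bool list list \<Rightarrow> bool list \<Rightarrow> bool list" where
  "lin_comb n rs cs = foldr vadd (map snd (filter fst (zip cs rs))) (zerov n)"

definition span :: "nat \<Rightarrow> bool list list \<Rightarrow> bool list set" where
  "span n rs = {lin_comb n rs cs | cs. length cs = length rs}"

definition lin_indep :: "nat \<Rightarrow> bool list list \<Rightarrow> bool" where
  "lin_indep n rs \<longleftrightarrow> (\<forall>cs. length cs = length rs \<and> lin_comb n rs cs = zerov n \<longrightarrow> (\<forall>c\<in>set cs. \<not> c))"

definition gen_matrix :: "nat \<Rightarrow> nat \<Rightarrow> bool list list \<Rightarrow> bool" where
  "gen_matrix n k G \<longleftrightarrow> length G = k \<and> (\<forall>r\<in>set G. length r = n) \<and> lin_indep n G"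

definition min_dist :: "nat \<Rightarrow> bool list set \<Rightarrow> nat" where
  "min_dist n C = Min {wt c | c. c \<in> C \<and> c \<noteq> zerov n}"

definition coset_wt :: "bool list \<Rightarrow> bool list set \<Rightarrow> nat" where
  "coset_wt x C = Min {wt (vadd x c) | c. c \<in> C}"

definition cov_radius :: "nat \<Rightarrow> bool list set \<Rightarrow> nat" where
  "cov_radius n C = Max {Min {wt (vadd u c) | c. c \<in> C} | u. length u = n}"

definition constr13 :: "bool list list \<Rightarrow> bool list \<Rightarrow> bool list list" where
  "constr13 G x = (True # False # x) # map (\<lambda>r. dotp x r # dotp x r # r) G"

definition constr2 :: "bool list list \<Rightarrow> bool list \<Rightarrow> bool list list" where
  "constr2 G x = (True # True # x) # map (\<lambda>r. dotp x r # False # r) G"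

end

theory Submission
  imports Defs
begin

lemma lc_Cons: "lin_comb m (r#rs) (c#cs) = (if c then vadd r (lin_comb m rs cs) else lin_comb m rs cs)"
  by (simp add: lin_comb_def)
lemma lc_Nil: "lin_comb m [] cs = zerov m"
  by (simp add: lin_comb_def)
lemma vadd_Cons: "vadd (a#u) (b#v) = (a\<noteq>b) # vadd u v"
  by (simp add: vadd_def)
lemma zerov_2: "zerov (n+2) = False # False # zerov n"
  by (simp add: zerov_def numeral_2_eq_2)
lemma zerov_Suc[simp]: "zerov (Suc m) = False # zerov m"
  by (simp add: zerov_def)
lemma length_vadd[simp]: "length (vadd u v) = min (length u) (length v)"
  by (simp add: vadd_def)
lemma length_zerov[simp]: "length (zerov m) = m"
  by (simp add: zerov_def)
lemma length_lc: "\<forall>r\<in>set rs. length r = m \<Longrightarrow> length (lin_comb m rs cs) = m"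
proof (induction rs arbitrary: cs)
  case Nil then show ?case by (simp add: lc_Nil)
next
  case (Cons r rs) then show ?case by (cases cs) (auto simp: lc_Cons lin_comb_def)
qed
lemma lc_zero: "lin_comb m rs (replicate (length rs) False) = zerov m"
  by (induction rs) (auto simp: lc_Cons lc_Nil)
lemma dotp_Cons: "dotp (a#x) (b#u) = ((a\<and>b) \<noteq> dotp x u)"
  by (cases a; cases b) (simp_all add: dotp_def)
lemma dotp_vadd: "length u = length x \<Longrightarrow> length v = length x \<Longrightarrow> dotp x (vadd u v) = (dotp x u \<noteq> dotp x v)"
proof (induction x arbitrary: u v)
  case Nil then show ?case by (simp add: dotp_def vadd_def)
next
  case (Cons a x) then show ?case
    by (cases u; cases v) (auto simp: vadd_Cons dotp_Cons)
qed
lemma dotp_zero: "dotp x (zerov m) = False"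
proof (induction x arbitrary: m)
  case Nil then show ?case by (simp add: dotp_def)
next
  case (Cons a x) then show ?case
    by (cases m) (auto simp: zerov_def dotp_Cons, simp add: dotp_def)
qed
lemma wt_Cons: "wt (a#v) = (if a then 1 else 0) + wt v"
  by (simp add: wt_def)
lemma wt_le: "wt v \<le> length v"
  by (simp add: wt_def)

lemma lc13: "\<forall>r\<in>set G. length r = n \<Longrightarrow> length x = n \<Longrightarrow>
  lin_comb (n+2) (map (\<lambda>r. dotp x r # dotp x r # r) G) cs
   = dotp x (lin_comb n G cs) # dotp x (lin_comb n G cs) # lin_comb n G cs"
proof (induction G arbitrary: cs)
  case Nil then show ?case by (simp add: lc_Nil zerov_2 dotp_zero)
next
  case (Cons r G)
  show ?case
  proof (cases cs)
    case Nil then show ?thesis by (simp add: lin_comb_def zerov_2 dotp_zero)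
  next
    case (Cons c cs')
    have IH: "lin_comb (n+2) (map (\<lambda>r. dotp x r # dotp x r # r) G) cs'
      = dotp x (lin_comb n G cs') # dotp x (lin_comb n G cs') # lin_comb n G cs'" using Cons.IH Cons.prems by simp
    have l: "length r = n" "length (lin_comb n G cs') = n" using Cons.prems length_lc by auto
    show ?thesis using IH l Cons.prems \<open>cs = c # cs'\<close>
      by (cases c) (simp_all add: lc_Cons vadd_Cons dotp_vadd)
  qed
qed

lemma lc2: "\<forall>r\<in>set G. length r = n \<Longrightarrow> length x = n \<Longrightarrow>
  lin_comb (n+2) (map (\<lambda>r. dotp x r # False # r) G) cs
   = dotp x (lin_comb n G cs) # False # lin_comb n G cs"
proof (induction G arbitrary: cs)
  case Nil then show ?case by (simp add: lc_Nil zerov_2 dotp_zero)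
next
  case (Cons r G)
  show ?case
  proof (cases cs)
    case Nil then show ?thesis by (simp add: lin_comb_def zerov_2 dotp_zero)
  next
    case (Cons c cs')
    have IH: "lin_comb (n+2) (map (\<lambda>r. dotp x r # False # r) G) cs'
      = dotp x (lin_comb n G cs') # False # lin_comb n G cs'" using Cons.IH Cons.prems by simp
    have l: "length r = n" "length (lin_comb n G cs') = n" using Cons.prems length_lc by auto
    show ?thesis using IH l Cons.prems \<open>cs = c # cs'\<close>
      by (cases c) (simp_all add: lc_Cons vadd_Cons dotp_vadd)
  qed
qed

lemma md_bounds:
  assumes "\<forall>v\<in>D. length v = m" "\<forall>v\<in>D. v \<noteq> zerov m \<longrightarrow> L \<le> wt v"
    "v0\<in>D" "v0 \<noteq> zerov m" "wt v0 \<le> U"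
  shows "L \<le> min_dist m D \<and> min_dist m D \<le> U"
proof -
  let ?S = "{wt c | c. c\<in>D \<and> c \<noteq> zerov m}"
  have fin: "finite ?S"
    by (rule finite_subset[of _ "{..m}"]) (use assms(1) wt_le in fastforce)+
  have "wt v0 \<in> ?S" using assms by blast
  hence "Min ?S \<le> wt v0" using fin by simp
  moreover have "L \<le> Min ?S" using fin \<open>wt v0 \<in> ?S\<close> assms(2)
    by (subst Min_ge_iff) auto
  ultimately show ?thesis using assms(5) by (simp add: min_dist_def)
qed

lemma span_len: "\<forall>r\<in>set G. length r = n \<Longrightarrow> \<forall>c\<in>span n G. length c = n"
  by (auto simp: span_def length_lc)

lemma cw_fin: "finite {wt (vadd u c) | c. c \<in> C}"
  by (rule finite_subset[of _ "{..length u}"]) (auto intro: le_trans[OF wt_le])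

lemma cw_le: "c \<in> C \<Longrightarrow> coset_wt x C \<le> wt (vadd x c)"
  unfolding coset_wt_def using cw_fin by (intro Min_le) auto

lemma cw_ex: "c \<in> C \<Longrightarrow> \<exists>c0\<in>C. wt (vadd x c0) = coset_wt x C"
proof -
  assume "c \<in> C"
  hence "{wt (vadd x c) | c. c \<in> C} \<noteq> {}" by blast
  from Min_in[OF cw_fin this] show ?thesis unfolding coset_wt_def by force
qed

lemma cw_cov: assumes "\<forall>c\<in>C. length c = n" "zerov n \<in> C" "length x = n"
  shows "coset_wt x C \<le> cov_radius n C"
proof -
  define T where "T = {Min {wt (vadd u c) | c. c \<in> C} | u. length u = n}"
  have ball: "\<forall>t\<in>T. t \<le> n"
  proof
    fix t assume "t \<in> T"
    then obtain u where u: "length u = n" "t = Min {wt (vadd u c) | c. c \<in> C}" unfolding T_def by blast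
    have mem: "wt (vadd u (zerov n)) \<in> {wt (vadd u c) | c. c \<in> C}" using assms(2) by blast
    have "t \<le> wt (vadd u (zerov n))" unfolding u(2) by (rule Min_le[OF cw_fin mem])
    also have "\<dots> \<le> n" using wt_le[of "vadd u (zerov n)"] u(1) by simp
    finally show "t \<le> n" .
  qed
  have sub: "T \<subseteq> {..n}"
  proof
    fix t assume "t \<in> T" thus "t \<in> {..n}" using ball by simp
  qed
  have fin: "finite T" by (rule finite_subset[OF sub finite_atMost])
  have mem: "coset_wt x C \<in> T" unfolding T_def coset_wt_def mem_Collect_eq
    by (rule exI[of _ x]) (simp add: assms(3))
  have "coset_wt x C \<le> Max T" by (rule Max_ge[OF fin mem])
  thus ?thesis unfolding cov_radius_def T_def .
qed

lemma md_le: assumes "\<forall>c\<in>C. length c = n" "c \<in> C" "c \<noteq> zerov n" shows "min_dist n C \<le> wt c"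
proof -
  have "finite {wt c | c. c \<in> C \<and> c \<noteq> zerov n}"
    by (rule finite_subset[of _ "{..n}"]) (use assms(1) wt_le in fastforce)+
  thus ?thesis unfolding min_dist_def using assms by (intro Min_le) auto
qed

lemma main13:
  assumes G: "\<forall>r\<in>set G. length r = n" and x: "length x = n"
  shows "min (min_dist n (span n G)) (coset_wt x (span n G) + 1) \<le> min_dist (n+2) (span (n+2) (constr13 G x))
          \<and> min_dist (n+2) (span (n+2) (constr13 G x)) \<le> cov_radius n (span n G) + 2"
proof -
  let ?C = "span n G" and ?D = "span (n+2) (constr13 G x)"
  have Clen: "\<forall>c\<in>?C. length c = n" using span_len[OF G] .
  have z: "zerov n \<in> ?C" unfolding span_def mem_Collect_eq by (intro exI[of _ "replicate (length G) False"]) (simp add: lc_zero)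
  have rows: "\<forall>r\<in>set (constr13 G x). length r = n+2" using G x by (auto simp: constr13_def)
  have Dlen: "\<forall>v\<in>?D. length v = n+2" using span_len[OF rows] .
  have form: "lin_comb (n+2) (constr13 G x) (a#cs) =
     (if a then (\<not> dotp x (lin_comb n G cs)) # dotp x (lin_comb n G cs) # vadd x (lin_comb n G cs)
      else dotp x (lin_comb n G cs) # dotp x (lin_comb n G cs) # lin_comb n G cs)" for a cs
    unfolding constr13_def lc_Cons lc13[OF G x] by (simp add: vadd_Cons)
  have inC: "length cs = length G \<Longrightarrow> lin_comb n G cs \<in> ?C" for cs unfolding span_def by blast
  have lower: "min (min_dist n ?C) (coset_wt x ?C + 1) \<le> wt v" if v: "v \<in> ?D" "v \<noteq> zerov (n+2)" for v
  proof -
    obtain cs where cs: "length cs = length (constr13 G x)" "v = lin_comb (n+2) (constr13 G x) cs"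
      using v(1) unfolding span_def by blast
    then obtain a cs' where cs': "cs = a # cs'" "length cs' = length G" by (cases cs) (auto simp: constr13_def)
    let ?c = "lin_comb n G cs'"
    show ?thesis
    proof (cases a)
      case True
      hence "wt v = 1 + wt (vadd x ?c)" using cs cs' form by (simp add: wt_Cons)
      moreover have "coset_wt x ?C \<le> wt (vadd x ?c)" using cw_le inC[OF cs'(2)] .
      ultimately show ?thesis by linarith
    next
      case False
      hence vv: "v = dotp x ?c # dotp x ?c # ?c" using cs cs' form by simp
      hence "?c \<noteq> zerov n" using v(2) by (auto simp: zerov_2 dotp_zero)
      hence "min_dist n ?C \<le> wt ?c" using md_le[OF Clen inC[OF cs'(2)]] by blast
      moreover have "wt ?c \<le> wt v" using vv by (simp add: wt_Cons)
      ultimately show ?thesis by linarith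
    qed
  qed
  obtain c0 where c0: "c0 \<in> ?C" "wt (vadd x c0) = coset_wt x ?C" using cw_ex[OF z] by blast
  then obtain cs where cs: "length cs = length G" "c0 = lin_comb n G cs" unfolding span_def by blast
  let ?v = "lin_comb (n+2) (constr13 G x) (True#cs)"
  have vD: "?v \<in> ?D" unfolding span_def mem_Collect_eq
    by (intro exI[of _ "True#cs"]) (simp add: cs(1) constr13_def)
  have vnz: "?v \<noteq> zerov (n+2)" unfolding form by (simp add: zerov_2)
  have vwt: "wt ?v \<le> coset_wt x ?C + 2" unfolding form using c0 cs by (simp add: wt_Cons)
  have "coset_wt x ?C \<le> cov_radius n ?C" using cw_cov[OF Clen z x] .
  moreover have "min (min_dist n ?C) (coset_wt x ?C + 1) \<le> min_dist (n+2) ?D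
      \<and> min_dist (n+2) ?D \<le> coset_wt x ?C + 2"
    by (rule md_bounds[OF Dlen _ vD vnz vwt]) (use lower in blast)
  ultimately show ?thesis by linarith
qed

lemma main2:
  assumes G: "\<forall>r\<in>set G. length r = n" and x: "length x = n"
  shows "min (min_dist n (span n G)) (coset_wt x (span n G) + 1) \<le> min_dist (n+2) (span (n+2) (constr2 G x))
          \<and> min_dist (n+2) (span (n+2) (constr2 G x)) \<le> cov_radius n (span n G) + 2"
proof -
  let ?C = "span n G" and ?D = "span (n+2) (constr2 G x)"
  have Clen: "\<forall>c\<in>?C. length c = n" using span_len[OF G] .
  have z: "zerov n \<in> ?C" unfolding span_def mem_Collect_eq by (intro exI[of _ "replicate (length G) False"]) (simp add: lc_zero)
  have rows: "\<forall>r\<in>set (constr2 G x). length r = n+2" using G x by (auto simp: constr2_def)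
  have Dlen: "\<forall>v\<in>?D. length v = n+2" using span_len[OF rows] .
  have form: "lin_comb (n+2) (constr2 G x) (a#cs) =
     (if a then (\<not> dotp x (lin_comb n G cs)) # True # vadd x (lin_comb n G cs)
      else dotp x (lin_comb n G cs) # False # lin_comb n G cs)" for a cs
    unfolding constr2_def lc_Cons lc2[OF G x] by (simp add: vadd_Cons)
  have inC: "length cs = length G \<Longrightarrow> lin_comb n G cs \<in> ?C" for cs unfolding span_def by blast
  have lower: "min (min_dist n ?C) (coset_wt x ?C + 1) \<le> wt v" if v: "v \<in> ?D" "v \<noteq> zerov (n+2)" for v
  proof -
    obtain cs where cs: "length cs = length (constr2 G x)" "v = lin_comb (n+2) (constr2 G x) cs"
      using v(1) unfolding span_def by blast
    then obtain a cs' where cs': "cs = a # cs'" "length cs' = length G" by (cases cs) (auto simp: constr2_def)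
    let ?c = "lin_comb n G cs'"
    show ?thesis
    proof (cases a)
      case True
      hence "wt v \<ge> 1 + wt (vadd x ?c)" using cs cs' form by (simp add: wt_Cons)
      moreover have "coset_wt x ?C \<le> wt (vadd x ?c)" using cw_le inC[OF cs'(2)] .
      ultimately show ?thesis by linarith
    next
      case False
      hence vv: "v = dotp x ?c # False # ?c" using cs cs' form by simp
      hence "?c \<noteq> zerov n" using v(2) by (auto simp: zerov_2 dotp_zero)
      hence "min_dist n ?C \<le> wt ?c" using md_le[OF Clen inC[OF cs'(2)]] by blast
      moreover have "wt ?c \<le> wt v" using vv by (simp add: wt_Cons)
      ultimately show ?thesis by linarith
    qed
  qed
  obtain c0 where c0: "c0 \<in> ?C" "wt (vadd x c0) = coset_wt x ?C" using cw_ex[OF z] by blast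
  then obtain cs where cs: "length cs = length G" "c0 = lin_comb n G cs" unfolding span_def by blast
  let ?v = "lin_comb (n+2) (constr2 G x) (True#cs)"
  have vD: "?v \<in> ?D" unfolding span_def mem_Collect_eq
    by (intro exI[of _ "True#cs"]) (simp add: cs(1) constr2_def)
  have vnz: "?v \<noteq> zerov (n+2)" unfolding form by (simp add: zerov_2)
  have vwt: "wt ?v \<le> coset_wt x ?C + 2" unfolding form using c0 cs by (simp add: wt_Cons)
  have "coset_wt x ?C \<le> cov_radius n ?C" using cw_cov[OF Clen z x] .
  moreover have "min (min_dist n ?C) (coset_wt x ?C + 1) \<le> min_dist (n+2) ?D
      \<and> min_dist (n+2) ?D \<le> coset_wt x ?C + 2"
    by (rule md_bounds[OF Dlen _ vD vnz vwt]) (use lower in blast)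
  ultimately show ?thesis by linarith
qed

theorem corollary1:
  fixes n k :: nat and G :: "bool list list" and x :: "bool list"
  assumes "gen_matrix n k G" and "k \<ge> 1" and "length x = n"
  shows "(dotp x x \<longrightarrow>
            min (min_dist n (span n G)) (coset_wt x (span n G) + 1) \<le> min_dist (n+2) (span (n+2) (constr13 G x))
          \<and> min_dist (n+2) (span (n+2) (constr13 G x)) \<le> cov_radius n (span n G) + 2)
       \<and> (\<not> dotp x x \<longrightarrow>
            min (min_dist n (span n G)) (coset_wt x (span n G) + 1) \<le> min_dist (n+2) (span (n+2) (constr13 G x))
          \<and> min_dist (n+2) (span (n+2) (constr13 G x)) \<le> cov_radius n (span n G) + 2)
       \<and> (\<not> dotp x x \<longrightarrow>
            min (min_dist n (span n G)) (coset_wt x (span n G) + 1) \<le> min_dist (n+2) (span (n+2) (constr2 G x))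
          \<and> min_dist (n+2) (span (n+2) (constr2 G x)) \<le> cov_radius n (span n G) + 2)"
proof -
  have G: "\<forall>r\<in>set G. length r = n" using assms(1) by (simp add: gen_matrix_def)
  show ?thesis using main13[OF G assms(3)] main2[OF G assms(3)] by blast
qed

end
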